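(* In generalized non-signalling theory (box world), a measurement $M=\{(r,\mu_r)\}$ on a system of boxes is maximally informative if and only if every effect $\mu_r$ can be represented by a vector with exactly one non-zero entry, that entry lying between $0$ and $1$.
   Context: Box world (GNST): a box has a finite set of inputs $x$ and outputs $a$. A system of $n$ boxes has states $\mathbf{p}$ given by all collections $p(\mathbf{a}|\mathbf{x})=p(a_1,\ldots,a_n|x_1,\ldots,x_n)\ge 0$ with $\sum_{\mathbf{a}}p(\mathbf{a}|\mathbf{x})=1$ for all $\mathbf{x}$ and satisfying no-signalling: for each $i$, $\sum_{a_i}p(\mathbf{a}|\mathbf{x})$ does not depend on $x_i$. An effect is any linear map $\mu$ from states to $[0,1]$; a vector $\mathbf{R}$ indexed by pairs $(\mathbf{a},\mathbf{x})$ represents $\mu$ if $\mu(\mathbf{p})=\sum_{\mathbf{a},\mathbf{x}}p(\mathbf{a}|\mathbf{x})R(\mathbf{a}|\mathbf{x})$ for all states. A measurement is a finite set $\{(r,\mu_r)\}$ of outcomes and effects with $\sum_r\mu_r$ equal to the constant map $1$; all such are allowed. A measurement $N=\{(s,\nu_s)\}$ refines $M=\{(r,\mu_r)\}$ if the outcome set of $N$ can be partitioned into sets $P_r$ with $\mu_r=\sum_{s\in P_r}\nu_s$ for each $r$; the refinement is trivial if $\nu_s$ is proportional to $\mu_r$ whenever $s\in P_r$. $M$ is maximally informative if it has no non-trivial refinement. *)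

theory Defs
  imports Complex_Main "HOL-Library.FuncSet"
begin

text \<open>A (conditional) probability table p is a function of (a, x); states are taken to vanish
  outside the domain so that each state has a unique representative.\<close>

definition box_system :: "nat \<Rightarrow> (nat \<Rightarrow> 'a set) \<Rightarrow> (nat \<Rightarrow> 'x set) \<Rightarrow> bool" where
  "box_system n A X \<longleftrightarrow> (\<forall>i<n. finite (A i) \<and> A i \<noteq> {} \<and> finite (X i) \<and> X i \<noteq> {})"

definition box_state ::
  "nat \<Rightarrow> (nat \<Rightarrow> 'a set) \<Rightarrow> (nat \<Rightarrow> 'x set) \<Rightarrow> ((nat \<Rightarrow> 'a) \<Rightarrow> (nat \<Rightarrow> 'x) \<Rightarrow> real) \<Rightarrow> bool" where
  "box_state n A X p \<longleftrightarrow>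
     (\<forall>a x. \<not> (a \<in> PiE {..<n} A \<and> x \<in> PiE {..<n} X) \<longrightarrow> p a x = 0) \<and>
     (\<forall>a\<in>PiE {..<n} A. \<forall>x\<in>PiE {..<n} X. 0 \<le> p a x) \<and>
     (\<forall>x\<in>PiE {..<n} X. (\<Sum>a\<in>PiE {..<n} A. p a x) = 1) \<and>
     (\<forall>i<n. \<forall>a\<in>PiE {..<n} A. \<forall>x\<in>PiE {..<n} X. \<forall>x'\<in>PiE {..<n} X.
        (\<forall>j. j \<noteq> i \<longrightarrow> x j = x' j) \<longrightarrow>
        (\<Sum>b\<in>A i. p (a(i := b)) x) = (\<Sum>b\<in>A i. p (a(i := b)) x'))"

definition box_effect ::
  "nat \<Rightarrow> (nat \<Rightarrow> 'a set) \<Rightarrow> (nat \<Rightarrow> 'x set) \<Rightarrow>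
   (((nat \<Rightarrow> 'a) \<Rightarrow> (nat \<Rightarrow> 'x) \<Rightarrow> real) \<Rightarrow> real) \<Rightarrow> bool" where
  "box_effect n A X \<mu> \<longleftrightarrow>
     (\<forall>p. box_state n A X p \<longrightarrow> 0 \<le> \<mu> p \<and> \<mu> p \<le> 1) \<and>
     (\<forall>p q t. box_state n A X p \<longrightarrow> box_state n A X q \<longrightarrow> 0 \<le> t \<longrightarrow> t \<le> 1 \<longrightarrow>
        \<mu> (\<lambda>a x. t * p a x + (1 - t) * q a x) = t * \<mu> p + (1 - t) * \<mu> q)"

definition box_represents ::
  "nat \<Rightarrow> (nat \<Rightarrow> 'a set) \<Rightarrow> (nat \<Rightarrow> 'x set) \<Rightarrow> ((nat \<Rightarrow> 'a) \<Rightarrow> (nat \<Rightarrow> 'x) \<Rightarrow> real) \<Rightarrow>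
   (((nat \<Rightarrow> 'a) \<Rightarrow> (nat \<Rightarrow> 'x) \<Rightarrow> real) \<Rightarrow> real) \<Rightarrow> bool" where
  "box_represents n A X R \<mu> \<longleftrightarrow>
     (\<forall>p. box_state n A X p \<longrightarrow>
        \<mu> p = (\<Sum>a\<in>PiE {..<n} A. \<Sum>x\<in>PiE {..<n} X. p a x * R a x))"

definition box_measurement ::
  "nat \<Rightarrow> (nat \<Rightarrow> 'a set) \<Rightarrow> (nat \<Rightarrow> 'x set) \<Rightarrow> 'r set \<Rightarrow>
   ('r \<Rightarrow> ((nat \<Rightarrow> 'a) \<Rightarrow> (nat \<Rightarrow> 'x) \<Rightarrow> real) \<Rightarrow> real) \<Rightarrow> bool" where
  "box_measurement n A X Out \<mu> \<longleftrightarrow>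
     finite Out \<and> (\<forall>r\<in>Out. box_effect n A X (\<mu> r)) \<and>
     (\<forall>p. box_state n A X p \<longrightarrow> (\<Sum>r\<in>Out. \<mu> r p) = 1)"

text \<open>N = (Out', \<nu>) refines M = (Out, \<mu>) via the partition of Out' into the fibres
  P_r = {s. f s = r} of f.\<close>

definition box_refines_via ::
  "nat \<Rightarrow> (nat \<Rightarrow> 'a set) \<Rightarrow> (nat \<Rightarrow> 'x set) \<Rightarrow>
   's set \<Rightarrow> ('s \<Rightarrow> ((nat \<Rightarrow> 'a) \<Rightarrow> (nat \<Rightarrow> 'x) \<Rightarrow> real) \<Rightarrow> real) \<Rightarrow> ('s \<Rightarrow> 'r) \<Rightarrow>
   'r set \<Rightarrow> ('r \<Rightarrow> ((nat \<Rightarrow> 'a) \<Rightarrow> (nat \<Rightarrow> 'x) \<Rightarrow> real) \<Rightarrow> real) \<Rightarrow> bool" where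
  "box_refines_via n A X Out' \<nu> f Out \<mu> \<longleftrightarrow>
     box_measurement n A X Out' \<nu> \<and> (\<forall>s\<in>Out'. f s \<in> Out) \<and>
     (\<forall>r\<in>Out. \<forall>p. box_state n A X p \<longrightarrow> \<mu> r p = (\<Sum>s\<in>{s\<in>Out'. f s = r}. \<nu> s p))"

definition box_trivial_via ::
  "nat \<Rightarrow> (nat \<Rightarrow> 'a set) \<Rightarrow> (nat \<Rightarrow> 'x set) \<Rightarrow>
   's set \<Rightarrow> ('s \<Rightarrow> ((nat \<Rightarrow> 'a) \<Rightarrow> (nat \<Rightarrow> 'x) \<Rightarrow> real) \<Rightarrow> real) \<Rightarrow> ('s \<Rightarrow> 'r) \<Rightarrow>
   ('r \<Rightarrow> ((nat \<Rightarrow> 'a) \<Rightarrow> (nat \<Rightarrow> 'x) \<Rightarrow> real) \<Rightarrow> real) \<Rightarrow> bool" where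
  "box_trivial_via n A X Out' \<nu> f \<mu> \<longleftrightarrow>
     (\<forall>s\<in>Out'. \<exists>c::real. \<forall>p. box_state n A X p \<longrightarrow> \<nu> s p = c * \<mu> (f s) p)"

text \<open>Maximally informative: every refinement is trivial. Outcome sets of refining measurements
  are finite subsets of nat (no loss of generality, any finite outcome set can be relabelled).\<close>

definition box_max_informative ::
  "nat \<Rightarrow> (nat \<Rightarrow> 'a set) \<Rightarrow> (nat \<Rightarrow> 'x set) \<Rightarrow> 'r set \<Rightarrow>
   ('r \<Rightarrow> ((nat \<Rightarrow> 'a) \<Rightarrow> (nat \<Rightarrow> 'x) \<Rightarrow> real) \<Rightarrow> real) \<Rightarrow> bool" where
  "box_max_informative n A X Out \<mu> \<longleftrightarrow>
     (\<forall>(Out' :: nat set) \<nu> f. box_refines_via n A X Out' \<nu> f Out \<mu> \<longrightarrow>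
        box_trivial_via n A X Out' \<nu> f \<mu>)"

end

theory Submission imports Defs begin

definition mix :: "real \<Rightarrow> ('a \<Rightarrow> 'b \<Rightarrow> real) \<Rightarrow> ('a \<Rightarrow> 'b \<Rightarrow> real) \<Rightarrow> 'a \<Rightarrow> 'b \<Rightarrow> real" where
  "mix t p q = (\<lambda>a x. t * p a x + (1 - t) * q a x)"

locale boxes =
  fixes n :: nat and A :: "nat \<Rightarrow> 'a set" and X :: "nat \<Rightarrow> 'x set"
  assumes sys: "box_system n A X"
begin

abbreviation "II \<equiv> PiE {..<n} A"
abbreviation "JJ \<equiv> PiE {..<n} X"
abbreviation "st \<equiv> box_state n A X"

lemma finI: "finite II" using sys unfolding box_system_def by (auto intro: finite_PiE)
lemma finJ: "finite JJ" using sys unfolding box_system_def by (auto intro: finite_PiE)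
lemma neI: "II \<noteq> {}" using sys unfolding box_system_def by (auto simp: PiE_eq_empty_iff)
lemma neJ: "JJ \<noteq> {}" using sys unfolding box_system_def by (auto simp: PiE_eq_empty_iff)
lemma finA: "i < n \<Longrightarrow> finite (A i)" using sys unfolding box_system_def by auto

lemma st_out: "st p \<Longrightarrow> \<not> (a \<in> II \<and> x \<in> JJ) \<Longrightarrow> p a x = 0"
  unfolding box_state_def by simp
lemma st_nonneg: "st p \<Longrightarrow> 0 \<le> p a x"
  unfolding box_state_def by (cases "a \<in> II \<and> x \<in> JJ") auto
lemma st_norm: "st p \<Longrightarrow> x \<in> JJ \<Longrightarrow> (\<Sum>a\<in>II. p a x) = 1"
  unfolding box_state_def by (elim conjE) (erule bspec)
lemma st_ns: "st p \<Longrightarrow> i < n \<Longrightarrow> a \<in> II \<Longrightarrow> x \<in> JJ \<Longrightarrow> x' \<in> JJ \<Longrightarrow> (\<forall>j. j \<noteq> i \<longrightarrow> x j = x' j)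
   \<Longrightarrow> (\<Sum>b\<in>A i. p (a(i := b)) x) = (\<Sum>b\<in>A i. p (a(i := b)) x')"
proof -
  assume p: "st p" and r: "i < n" "a \<in> II" "x \<in> JJ" "x' \<in> JJ" "\<forall>j. j \<noteq> i \<longrightarrow> x j = x' j"
  have h: "\<forall>i<n. \<forall>a\<in>II. \<forall>x\<in>JJ. \<forall>x'\<in>JJ.
        (\<forall>j. j \<noteq> i \<longrightarrow> x j = x' j) \<longrightarrow>
        (\<Sum>b\<in>A i. p (a(i := b)) x) = (\<Sum>b\<in>A i. p (a(i := b)) x')"
    using p unfolding box_state_def by (elim conjE) assumption
  show ?thesis by (rule h[rule_format, OF r(1-4)]) (use r(5) in blast)
qed

lemma upd_in: "a \<in> II \<Longrightarrow> i < n \<Longrightarrow> b \<in> A i \<Longrightarrow> a(i := b) \<in> II"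
  by (auto simp: PiE_iff extensional_def)

lemma st_affine:
  assumes p: "st p" and q: "st q"
    and nn: "\<And>a x. a \<in> II \<Longrightarrow> x \<in> JJ \<Longrightarrow> 0 \<le> t * p a x + (1 - t) * q a x"
  shows "st (mix t p q)"
  unfolding box_state_def mix_def
proof (intro conjI ballI allI impI)
  fix a x assume "\<not> (a \<in> II \<and> x \<in> JJ)"
  thus "t * p a x + (1 - t) * q a x = 0" using st_out[OF p] st_out[OF q] by simp
next
  fix a x assume "a \<in> II" "x \<in> JJ" thus "0 \<le> t * p a x + (1 - t) * q a x" by (rule nn)
next
  fix x assume "x \<in> JJ"
  thus "(\<Sum>a\<in>II. t * p a x + (1 - t) * q a x) = 1"
  proof -
    have "(\<Sum>a\<in>II. t * p a x + (1 - t) * q a x) = t * (\<Sum>a\<in>II. p a x) + (1 - t) * (\<Sum>a\<in>II. q a x)"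
      by (simp add: sum.distrib sum_distrib_left)
    thus ?thesis using st_norm[OF p \<open>x \<in> JJ\<close>] st_norm[OF q \<open>x \<in> JJ\<close>] by simp
  qed
next
  fix i a x x' assume "i < n" "a \<in> II" "x \<in> JJ" "x' \<in> JJ" "\<forall>j. j \<noteq> i \<longrightarrow> x j = x' j"
  thus "(\<Sum>b\<in>A i. t * p (a(i := b)) x + (1 - t) * q (a(i := b)) x) =
        (\<Sum>b\<in>A i. t * p (a(i := b)) x' + (1 - t) * q (a(i := b)) x')"
  proof -
    have e: "\<And>y. (\<Sum>b\<in>A i. t * p (a(i := b)) y + (1 - t) * q (a(i := b)) y) = t * (\<Sum>b\<in>A i. p (a(i := b)) y) + (1 - t) * (\<Sum>b\<in>A i. q (a(i := b)) y)"
      by (simp add: sum.distrib sum_distrib_left)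
    show ?thesis unfolding e using st_ns[OF p, of i a x x'] st_ns[OF q, of i a x x'] \<open>i < n\<close> \<open>a \<in> II\<close> \<open>x \<in> JJ\<close> \<open>x' \<in> JJ\<close> \<open>\<forall>j. j \<noteq> i \<longrightarrow> x j = x' j\<close> by simp
  qed
qed

lemma st_mix: "st p \<Longrightarrow> st q \<Longrightarrow> 0 \<le> t \<Longrightarrow> t \<le> 1 \<Longrightarrow> st (mix t p q)"
proof -
  assume p: "st p" and q: "st q" and t: "0 \<le> t" "t \<le> 1"
  show ?thesis
  proof (rule st_affine[OF p q])
    fix a x show "0 \<le> t * p a x + (1 - t) * q a x"
      using t st_nonneg[OF p, of a x] st_nonneg[OF q, of a x] by simp
  qed
qed

lemma eff_mix: "box_effect n A X \<mu> \<Longrightarrow> st p \<Longrightarrow> st q \<Longrightarrow> 0 \<le> t \<Longrightarrow> t \<le> 1 \<Longrightarrow>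
   \<mu> (mix t p q) = t * \<mu> p + (1 - t) * \<mu> q"
  unfolding box_effect_def mix_def by blast
lemma eff_nonneg: "box_effect n A X \<mu> \<Longrightarrow> st p \<Longrightarrow> 0 \<le> \<mu> p"
  unfolding box_effect_def by blast
lemma eff_le1: "box_effect n A X \<mu> \<Longrightarrow> st p \<Longrightarrow> \<mu> p \<le> 1"
  unfolding box_effect_def by blast

definition det :: "(nat \<Rightarrow> 'a) \<Rightarrow> (nat \<Rightarrow> 'a) \<Rightarrow> (nat \<Rightarrow> 'x) \<Rightarrow> real" where
  "det a0 = (\<lambda>a x. if a = a0 \<and> x \<in> JJ then 1 else 0)"

lemma st_det: assumes a0: "a0 \<in> II" shows "st (det a0)"
  unfolding box_state_def det_def
proof (intro conjI ballI allI impI)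
  fix i a x x' assume i: "i < n" and a: "a \<in> II" and "x \<in> JJ" "x' \<in> JJ" "\<forall>j. j \<noteq> i \<longrightarrow> x j = x' j"
  have "\<And>b. (a(i := b) = a0) \<longleftrightarrow> (b = a0 i \<and> a(i := a0 i) = a0)"
  proof
    fix b assume h: "a(i := b) = a0"
    hence "b = a0 i" by (metis fun_upd_same)
    moreover have "a(i := a0 i) = a0" using h by (metis fun_upd_triv fun_upd_upd)
    ultimately show "b = a0 i \<and> a(i := a0 i) = a0" by simp
  next
    fix b assume "b = a0 i \<and> a(i := a0 i) = a0" thus "a(i := b) = a0" by simp
  qed
  note iff = this
  have a0i: "a0 i \<in> A i" using a0 i by (auto simp: PiE_iff)
  have key: "(\<Sum>b\<in>A i. if a(i := b) = a0 \<and> y \<in> JJ then 1 else 0) = (if a(i := a0 i) = a0 then 1 else (0::real))"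
    if y: "y \<in> JJ" for y
  proof (cases "a(i := a0 i) = a0")
    case True
    have "(\<Sum>b\<in>A i. if a(i := b) = a0 \<and> y \<in> JJ then 1 else 0) = (\<Sum>b\<in>A i. if b = a0 i then 1 else (0::real))"
    proof (rule sum.cong[OF refl])
      fix b show "(if a(i := b) = a0 \<and> y \<in> JJ then 1 else 0) = (if b = a0 i then 1 else (0::real))"
        using iff[of b] True y by simp
    qed
    also have "\<dots> = 1" using a0i finA[OF i] by simp
    finally show ?thesis using True by simp
  next
    case False
    have "(\<Sum>b\<in>A i. if a(i := b) = a0 \<and> y \<in> JJ then 1 else 0) = (\<Sum>b\<in>A i. (0::real))"
    proof (rule sum.cong[OF refl])
      fix b show "(if a(i := b) = a0 \<and> y \<in> JJ then 1 else 0) = (0::real)"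
        using iff[of b] False by simp
    qed
    thus ?thesis using False by simp
  qed
  show "(\<Sum>b\<in>A i. if a(i := b) = a0 \<and> x \<in> JJ then 1 else 0) =
        (\<Sum>b\<in>A i. if a(i := b) = a0 \<and> x' \<in> JJ then 1 else 0 :: real)"
    using key[OF \<open>x \<in> JJ\<close>] key[OF \<open>x' \<in> JJ\<close>] by simp
qed (use a0 finI in simp_all)


lemma Kinv:
  assumes p: "st p" and a0: "a0 \<in> II" and x0: "x0 \<in> JJ"
  shows "x \<in> JJ \<Longrightarrow> (\<forall>i<n. (\<exists>b\<in>A i. b \<noteq> a0 i) \<longrightarrow> x i = x0 i) \<Longrightarrow> p a0 x = p a0 x0"
proof (induction "card {i. i < n \<and> x i \<noteq> x0 i}" arbitrary: x rule: less_induct)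
  case less
  show ?case
  proof (cases "{i. i < n \<and> x i \<noteq> x0 i} = {}")
    case True
    then have "x = x0" using PiE_ext[OF less.prems(1) x0] by auto
    thus ?thesis by simp
  next
    case False
    then obtain i where i: "i < n" "x i \<noteq> x0 i" by auto
    define x' where "x' = x(i := x0 i)"
    have x': "x' \<in> JJ" using less.prems(1) x0 i unfolding x'_def by (auto simp: PiE_iff extensional_def)
    have Ai: "A i = {a0 i}" using less.prems(2) i a0 by (auto simp: PiE_iff)
    have sub: "{j. j < n \<and> x' j \<noteq> x0 j} \<subset> {j. j < n \<and> x j \<noteq> x0 j}" using i by (auto simp: x'_def)
    have "card {j. j < n \<and> x' j \<noteq> x0 j} < card {j. j < n \<and> x j \<noteq> x0 j}"
      by (rule psubset_card_mono[OF _ sub]) auto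
    moreover have "\<forall>j<n. (\<exists>b\<in>A j. b \<noteq> a0 j) \<longrightarrow> x' j = x0 j" using less.prems(2) by (auto simp: x'_def)
    ultimately have IH: "p a0 x' = p a0 x0" using less.hyps x' by blast
    have "(\<Sum>b\<in>A i. p (a0(i := b)) x) = (\<Sum>b\<in>A i. p (a0(i := b)) x')"
      by (rule st_ns[OF p i(1) a0 less.prems(1) x']) (auto simp: x'_def)
    hence "p a0 x = p a0 x'" using Ai by simp
    thus ?thesis using IH by simp
  qed
qed

definition Kset :: "(nat \<Rightarrow> 'a) \<Rightarrow> nat set" where
  "Kset a0 = {i. i < n \<and> (\<exists>b\<in>A i. b \<noteq> a0 i)}"
definition beta :: "(nat \<Rightarrow> 'a) \<Rightarrow> nat \<Rightarrow> 'a" where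
  "beta a0 i = (SOME b. b \<in> A i \<and> b \<noteq> a0 i)"
definition wt :: "(nat \<Rightarrow> 'a) \<Rightarrow> nat \<Rightarrow> 'a \<Rightarrow> real" where
  "wt a0 i b = (if i \<in> Kset a0 then (if b = a0 i \<or> b = beta a0 i then 1/2 else 0) else 1)"
definition sg :: "(nat \<Rightarrow> 'a) \<Rightarrow> nat \<Rightarrow> 'a \<Rightarrow> real" where
  "sg a0 i b = (if i \<in> Kset a0 \<and> b \<noteq> a0 i then -1 else 1)"
definition sig :: "(nat \<Rightarrow> 'a) \<Rightarrow> (nat \<Rightarrow> 'x) \<Rightarrow> (nat \<Rightarrow> 'x) \<Rightarrow> real" where
  "sig a0 x0 x = (if \<forall>i\<in>Kset a0. x i = x0 i then -1 else 1)"
definition zz :: "(nat \<Rightarrow> 'a) \<Rightarrow> (nat \<Rightarrow> 'x) \<Rightarrow> (nat \<Rightarrow> 'a) \<Rightarrow> (nat \<Rightarrow> 'x) \<Rightarrow> real" where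
  "zz a0 x0 a x = (if a \<in> II \<and> x \<in> JJ then (\<Prod>i<n. wt a0 i (a i)) + sig a0 x0 x * (\<Prod>i<n. wt a0 i (a i) * sg a0 i (a i)) else 0)"

lemma beta: "i \<in> Kset a0 \<Longrightarrow> beta a0 i \<in> A i \<and> beta a0 i \<noteq> a0 i"
  unfolding beta_def Kset_def by (rule someI_ex) auto

lemma notK: "a0 \<in> II \<Longrightarrow> i < n \<Longrightarrow> i \<notin> Kset a0 \<Longrightarrow> A i = {a0 i}"
  unfolding Kset_def by (auto simp: PiE_iff)

lemma wsum: assumes a0: "a0 \<in> II" and i: "i < n" shows "(\<Sum>b\<in>A i. wt a0 i b) = 1"
proof (cases "i \<in> Kset a0")
  case True
  note bt = beta[OF True]
  have a0i: "a0 i \<in> A i" using a0 i by (auto simp: PiE_iff)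
  have "(\<Sum>b\<in>A i. wt a0 i b) = (\<Sum>b\<in>A i. (if b = a0 i then 1/2 else 0) + (if b = beta a0 i then 1/2 else 0))"
    by (rule sum.cong) (use True bt in \<open>auto simp: wt_def\<close>)
  also have "\<dots> = 1" using bt a0i finA[OF i] by (simp add: sum.distrib)
  finally show ?thesis .
qed (use notK[OF a0 i] in \<open>simp add: wt_def\<close>)

lemma wssum: assumes a0: "a0 \<in> II" and i: "i < n"
  shows "(\<Sum>b\<in>A i. wt a0 i b * sg a0 i b) = (if i \<in> Kset a0 then 0 else 1)"
proof (cases "i \<in> Kset a0")
  case True
  note bt = beta[OF True]
  have a0i: "a0 i \<in> A i" using a0 i by (auto simp: PiE_iff)
  have "(\<Sum>b\<in>A i. wt a0 i b * sg a0 i b) = (\<Sum>b\<in>A i. (if b = a0 i then 1/2 else 0) - (if b = beta a0 i then 1/2 else 0))"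
    by (rule sum.cong) (use True bt in \<open>auto simp: wt_def sg_def\<close>)
  also have "\<dots> = 0" using bt a0i finA[OF i] by (simp add: sum_subtractf)
  finally show ?thesis using True by simp
qed (use notK[OF a0 i] in \<open>simp add: wt_def sg_def\<close>)

lemma zz_a0: assumes a0: "a0 \<in> II" and x: "x \<in> JJ"
  shows "zz a0 x0 a0 x = (1 + sig a0 x0 x) * (\<Prod>i<n. wt a0 i (a0 i))"
    and "(\<Prod>i<n. wt a0 i (a0 i)) > 0"
proof -
  have "(\<Prod>i<n. wt a0 i (a0 i) * sg a0 i (a0 i)) = (\<Prod>i<n. wt a0 i (a0 i))"
    by (rule prod.cong) (auto simp: sg_def)
  thus "zz a0 x0 a0 x = (1 + sig a0 x0 x) * (\<Prod>i<n. wt a0 i (a0 i))"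
    using a0 x by (simp add: zz_def algebra_simps)
  show "(\<Prod>i<n. wt a0 i (a0 i)) > 0" by (rule prod_pos) (auto simp: wt_def)
qed

lemma st_zz: assumes a0: "a0 \<in> II" and K: "Kset a0 \<noteq> {}" shows "st (zz a0 x0)"
  unfolding box_state_def
proof (intro conjI ballI allI impI)
  fix a x assume "\<not> (a \<in> II \<and> x \<in> JJ)" thus "zz a0 x0 a x = 0" unfolding zz_def by auto
next
  fix a x assume ax: "a \<in> II" "x \<in> JJ"
  have W: "(\<Prod>i<n. wt a0 i (a i)) \<ge> 0" by (rule prod_nonneg) (auto simp: wt_def)
  have S: "\<bar>\<Prod>i<n. sg a0 i (a i)\<bar> = 1" unfolding abs_prod by (rule prod.neutral) (simp add: sg_def)
  have "\<bar>sig a0 x0 x * (\<Prod>i<n. sg a0 i (a i))\<bar> = 1" using S by (simp add: abs_mult sig_def)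
  hence "0 \<le> 1 + sig a0 x0 x * (\<Prod>i<n. sg a0 i (a i))" by linarith
  hence "0 \<le> (\<Prod>i<n. wt a0 i (a i)) * (1 + sig a0 x0 x * (\<Prod>i<n. sg a0 i (a i)))" using W by simp
  thus "0 \<le> zz a0 x0 a x" using ax by (simp add: zz_def prod.distrib algebra_simps)
next
  fix x assume x: "x \<in> JJ"
  have fin: "\<And>i. i \<in> {..<n} \<Longrightarrow> finite (A i)" using finA by auto
  have 1: "(\<Sum>a\<in>II. \<Prod>i<n. wt a0 i (a i)) = 1"
    using prod_sum_PiE[of "{..<n}" A "wt a0", OF _ fin] wsum[OF a0] by simp
  obtain k where k: "k \<in> Kset a0" using K by auto
  hence kn: "k < n" by (simp add: Kset_def)
  have "(\<Sum>a\<in>II. \<Prod>i<n. wt a0 i (a i) * sg a0 i (a i)) = (\<Prod>i<n. \<Sum>b\<in>A i. wt a0 i b * sg a0 i b)"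
    using prod_sum_PiE[of "{..<n}" A "\<lambda>i b. wt a0 i b * sg a0 i b", OF _ fin] by simp
  also have "\<dots> = 0" using k kn wssum[OF a0] by (auto intro!: prod_zero)
  finally have 2: "(\<Sum>a\<in>II. \<Prod>i<n. wt a0 i (a i) * sg a0 i (a i)) = 0" .
  have "(\<Sum>a\<in>II. zz a0 x0 a x) = (\<Sum>a\<in>II. \<Prod>i<n. wt a0 i (a i)) + sig a0 x0 x * (\<Sum>a\<in>II. \<Prod>i<n. wt a0 i (a i) * sg a0 i (a i))"
    using x by (simp add: zz_def sum.distrib sum_distrib_left)
  thus "(\<Sum>a\<in>II. zz a0 x0 a x) = 1" using 1 2 by simp
next
  fix i a x x' assume i: "i < n" and a: "a \<in> II" and x: "x \<in> JJ" and x': "x' \<in> JJ"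
    and agree: "\<forall>j. j \<noteq> i \<longrightarrow> x j = x' j"
  define W where "W = (\<Prod>j\<in>{..<n}-{i}. wt a0 j (a j))"
  define S where "S = (\<Prod>j\<in>{..<n}-{i}. wt a0 j (a j) * sg a0 j (a j))"
  have eq: "(\<Sum>b\<in>A i. zz a0 x0 (a(i := b)) y) = W + sig a0 x0 y * S * (if i \<in> Kset a0 then 0 else 1)"
    if y: "y \<in> JJ" for y
  proof -
    have "\<And>b. b \<in> A i \<Longrightarrow> zz a0 x0 (a(i := b)) y = wt a0 i b * W + sig a0 x0 y * (S * (wt a0 i b * sg a0 i b))"
    proof -
      fix b assume b: "b \<in> A i"
      have p1: "(\<Prod>j<n. wt a0 j ((a(i := b)) j)) = wt a0 i b * W"
        unfolding W_def using i by (subst prod.remove[of _ i]) (auto intro!: prod.cong)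
      have p2: "(\<Prod>j<n. wt a0 j ((a(i := b)) j) * sg a0 j ((a(i := b)) j)) = S * (wt a0 i b * sg a0 i b)"
        unfolding S_def using i by (subst prod.remove[of _ i]) (auto intro!: prod.cong)
      show "zz a0 x0 (a(i := b)) y = wt a0 i b * W + sig a0 x0 y * (S * (wt a0 i b * sg a0 i b))"
        using upd_in[OF a i b] y p1 p2 by (simp add: zz_def)
    qed
    hence "(\<Sum>b\<in>A i. zz a0 x0 (a(i := b)) y) = (\<Sum>b\<in>A i. wt a0 i b * W + sig a0 x0 y * (S * (wt a0 i b * sg a0 i b)))"
      by (rule sum.cong[OF refl])
    also have "\<dots> = (\<Sum>b\<in>A i. wt a0 i b) * W + sig a0 x0 y * (S * (\<Sum>b\<in>A i. wt a0 i b * sg a0 i b))"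
      by (simp add: sum.distrib sum_distrib_left sum_distrib_right)
    also have "\<dots> = W + sig a0 x0 y * S * (if i \<in> Kset a0 then 0 else 1)"
      using wsum[OF a0 i] wssum[OF a0 i] by simp
    finally show ?thesis .
  qed
  have "i \<notin> Kset a0 \<Longrightarrow> sig a0 x0 x = sig a0 x0 x'"
    using agree unfolding sig_def by metis
  thus "(\<Sum>b\<in>A i. zz a0 x0 (a(i := b)) x) = (\<Sum>b\<in>A i. zz a0 x0 (a(i := b)) x')"
    unfolding eq[OF x] eq[OF x'] by auto
qed


lemma st_le1: "st p \<Longrightarrow> p a x \<le> 1"
proof (cases "a \<in> II \<and> x \<in> JJ")
  case True
  assume p: "st p"
  have "p a x \<le> (\<Sum>a\<in>II. p a x)" using True finI by (intro member_le_sum) (auto intro: st_nonneg[OF p])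
  thus ?thesis using st_norm[OF p] True by simp
qed (auto simp: st_out)

lemma aux: "(k::real) * c = 1 \<Longrightarrow> k = 1 - s \<Longrightarrow> s * D + k * (c * M + (1 - c) * D) = M"
proof -
  assume kc: "k * c = 1" and k: "k = 1 - s"
  have "s * D + k * (c * M + (1 - c) * D) = s * D + (k * c) * M + (k - k * c) * D" by (simp add: algebra_simps)
  also have "\<dots> = s * D + M + (k - 1) * D" by (simp add: kc)
  also have "\<dots> = M" unfolding k by (simp add: algebra_simps)
  finally show ?thesis .
qed

lemma facet:
  assumes a0: "a0 \<in> II" and x0: "x0 \<in> JJ" and eff: "box_effect n A X \<nu>"
    and van: "\<And>z. st z \<Longrightarrow> z a0 x0 = 0 \<Longrightarrow> \<nu> z = 0" and p: "st p"
  shows "\<nu> p = p a0 x0 * \<nu> (det a0)"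
proof (cases "Kset a0 = {}")
  case True
  have II: "II = {a0}"
  proof
    show "II \<subseteq> {a0}"
    proof
      fix a assume a: "a \<in> II"
      have "a = a0"
        by (rule PiE_ext[OF a a0]) (use a notK[OF a0] True in \<open>auto simp: PiE_iff\<close>)
      thus "a \<in> {a0}" by simp
    qed
  qed (use a0 in auto)
  have pd: "p = det a0"
  proof (intro ext)
    fix a x
    show "p a x = det a0 a x"
    proof (cases "a \<in> II \<and> x \<in> JJ")
      case True
      thus ?thesis using st_norm[OF p, of x] II by (simp add: det_def)
    qed (use st_out[OF p] a0 in \<open>auto simp: det_def\<close>)
  qed
  have "p a0 x0 = 1" using x0 by (simp add: pd det_def)
  thus ?thesis using pd by simp
next
  case False
  define t where "t = p a0 x0"
  have t0: "0 \<le> t" and t1: "t \<le> 1" unfolding t_def using st_nonneg[OF p] st_le1[OF p] .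
  define d where "d = det a0"
  have d: "st d" unfolding d_def by (rule st_det[OF a0])
  define z where "z = zz a0 x0"
  have z: "st z" unfolding z_def by (rule st_zz[OF a0 False])
  define W0 where "W0 = (\<Prod>i<n. wt a0 i (a0 i))"
  have W0: "W0 > 0" unfolding W0_def using zz_a0[OF a0 x0] by simp
  have za0: "\<And>x. x \<in> JJ \<Longrightarrow> z a0 x = (1 + sig a0 x0 x) * W0" unfolding z_def W0_def using zz_a0[OF a0] by simp
  have "z a0 x0 = 0" using za0[OF x0] by (simp add: sig_def)
  hence nz: "\<nu> z = 0" by (rule van[OF z])
  define l where "l = 2 * W0 / (1 + 2 * W0)"
  have l0: "0 < l" and l1: "l < 1" using W0 by (auto simp: l_def field_simps)
  have lW: "(1 - l) * (2 * W0) = l" using W0 by (simp add: l_def field_simps)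
  define m where "m = mix l p z"
  have m: "st m" unfolding m_def using st_mix[OF p z] l0 l1 by simp
  have num: "\<nu> m = l * \<nu> p" unfolding m_def using eff_mix[OF eff p z] l0 l1 nz by simp
  have "l * t \<le> l" using t1 l0 by (simp add: mult_left_le)
  hence lt: "l * t < 1" using l1 by linarith
  define w where "w = mix (1 / (1 - l * t)) m d"
  have pos: "0 \<le> m a x - l * t * d a x" if ax: "a \<in> II" "x \<in> JJ" for a x
  proof (cases "a = a0")
    case False
    thus ?thesis using st_nonneg[OF m] by (simp add: d_def det_def)
  next
    case True
    show ?thesis
    proof (cases "\<forall>i\<in>Kset a0. x i = x0 i")
      case True
      have "p a0 x = p a0 x0"
        by (rule Kinv[OF p a0 x0 ax(2)]) (use True in \<open>auto simp: Kset_def\<close>)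
      moreover have "0 \<le> z a0 x" by (rule st_nonneg[OF z])
      ultimately show ?thesis using \<open>a = a0\<close> ax l1 by (simp add: m_def mix_def d_def det_def t_def)
    next
      case False
      hence "sig a0 x0 x = 1" unfolding sig_def by (simp only: if_False)
      hence "z a0 x = 2 * W0" using za0[OF ax(2)] by simp
      moreover have "0 \<le> p a0 x" by (rule st_nonneg[OF p])
      ultimately have "m a0 x - l * t * d a0 x \<ge> (1 - l) * (2 * W0) - l * t"
        using ax l0 by (simp add: m_def mix_def d_def det_def)
      moreover have "(1 - l) * (2 * W0) - l * t \<ge> 0" using lW t1 l0
        by (simp add: mult_left_le)
      ultimately show ?thesis using \<open>a = a0\<close> by simp
    qed
  qed
  have ne: "1 - l * t \<noteq> 0" using lt by simp
  have w: "st w" unfolding w_def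
  proof (rule st_affine[OF m d])
    fix a x assume "a \<in> II" "x \<in> JJ"
    have eq1: "1 - 1 / (1 - l * t) = - (l * t) * (1 / (1 - l * t))" using ne by (simp add: field_simps)
    have "(1 / (1 - l * t)) * m a x + (1 - 1 / (1 - l * t)) * d a x = (1 / (1 - l * t)) * (m a x - l * t * d a x)"
      unfolding eq1 by (simp add: algebra_simps)
    moreover have "0 \<le> (1 / (1 - l * t)) * (m a x - l * t * d a x)"
      using pos[OF \<open>a \<in> II\<close> \<open>x \<in> JJ\<close>] lt by simp
    ultimately show "0 \<le> (1 / (1 - l * t)) * m a x + (1 - 1 / (1 - l * t)) * d a x" by simp
  qed
  have c1: "(1 - l * t) * (1 / (1 - l * t)) = 1" using lt by simp
  have c2: "(1 - l * t) * (1 - 1 / (1 - l * t)) = - (l * t)"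
    using c1 by (simp add: right_diff_distrib)
  have mw: "m = mix (l * t) d w"
  proof (intro ext)
    fix a x
    have "mix (l * t) d w a x = l * t * d a x + (1 - l * t) * ((1 / (1 - l * t)) * m a x + (1 - 1 / (1 - l * t)) * d a x)"
      by (simp only: w_def mix_def)
    also have "\<dots> = m a x" by (rule aux[OF c1 refl])
    finally show "m a x = mix (l * t) d w a x" by simp
  qed
  have "w a0 x0 = 0"
    unfolding w_def mix_def using lt x0 a0
    by (simp add: m_def mix_def d_def det_def field_simps t_def za0 sig_def)
  hence nw: "\<nu> w = 0" by (rule van[OF w])
  have "\<nu> m = l * t * \<nu> d"
    using mw eff_mix[OF eff d w, of "l * t"] nw lt l0 t0 by simp
  hence "l * \<nu> p = l * (t * \<nu> d)" using num by simp
  thus ?thesis using l0 by (simp add: t_def d_def)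
qed


definition supp :: "((nat \<Rightarrow> 'a) \<Rightarrow> (nat \<Rightarrow> 'x) \<Rightarrow> real) \<Rightarrow> ((nat \<Rightarrow> 'a) \<times> (nat \<Rightarrow> 'x)) set" where
  "supp p = {e \<in> II \<times> JJ. p (fst e) (snd e) \<noteq> 0}"

definition basic :: "((nat \<Rightarrow> 'a) \<Rightarrow> (nat \<Rightarrow> 'x) \<Rightarrow> real) \<Rightarrow> bool" where
  "basic p \<longleftrightarrow> st p \<and> (\<forall>q. st q \<longrightarrow> supp q \<subseteq> supp p \<longrightarrow> q = p)"

lemma fin_supp: "finite (supp p)"
  by (rule finite_subset[of _ "II \<times> JJ"]) (auto simp: supp_def finI finJ)

lemma st_eq: "st p \<Longrightarrow> st q \<Longrightarrow> (\<And>a x. a \<in> II \<Longrightarrow> x \<in> JJ \<Longrightarrow> p a x = q a x) \<Longrightarrow> p = q"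
  by (intro ext) (metis st_out)

lemma one_side:
  assumes p: "st p" and q: "st q" and a': "a' \<in> II" and x': "x' \<in> JJ" and ne: "q a' x' \<noteq> p a' x'"
  shows "\<exists>a\<in>II. q a x' < p a x'"
proof (rule ccontr)
  assume "\<not> ?thesis"
  hence le: "\<forall>a\<in>II. p a x' \<le> q a x'" by auto
  hence "p a' x' < q a' x'" using a' ne by force
  hence "(\<Sum>a\<in>II. p a x') < (\<Sum>a\<in>II. q a x')"
    using le a' finI by (intro sum_strict_mono_ex1) auto
  thus False using st_norm[OF p x'] st_norm[OF q x'] by simp
qed

lemma aux2: "(k::real) * c = 1 \<Longrightarrow> c * (k * G + (1 - k) * B) + (1 - c) * B = G"
proof -
  assume kc: "k * c = 1"
  have "c * (k * G + (1 - k) * B) + (1 - c) * B = (k * c) * G + (1 - k * c) * B" by (simp add: algebra_simps)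
  thus ?thesis by (simp add: kc)
qed

lemma decomp:
  assumes p: "st p" and q: "st q" and sub: "supp q \<subseteq> supp p" and qp: "q \<noteq> p"
  shows "\<exists>p1 p2 \<theta>. st p1 \<and> st p2 \<and> 0 \<le> \<theta> \<and> \<theta> \<le> 1 \<and> supp p1 \<subset> supp p \<and> supp p2 \<subset> supp p \<and> p = mix \<theta> p1 p2"
proof -
  have qz: "p a x = 0 \<Longrightarrow> q a x = 0" for a x
  proof (rule ccontr)
    assume "p a x = 0" "q a x \<noteq> 0"
    hence "a \<in> II \<and> x \<in> JJ" using st_out[OF q] by blast
    hence "(a, x) \<in> supp q" using \<open>q a x \<noteq> 0\<close> by (simp add: supp_def)
    hence "(a, x) \<in> supp p" using sub by blast
    thus False using \<open>p a x = 0\<close> by (simp add: supp_def)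
  qed
  obtain a' x' where a': "a' \<in> II" and x': "x' \<in> JJ" and ne: "q a' x' \<noteq> p a' x'"
    using st_eq[OF q p] qp by metis
  define P where "P = (\<lambda>e. p (fst e) (snd e))"
  define Q where "Q = (\<lambda>e. q (fst e) (snd e))"
  have P0: "\<And>e. 0 \<le> P e" unfolding P_def by (rule st_nonneg[OF p])
  have Q0: "\<And>e. 0 \<le> Q e" unfolding Q_def by (rule st_nonneg[OF q])
  have QP: "\<And>e. P e = 0 \<Longrightarrow> Q e = 0" unfolding P_def Q_def using qz by blast
  define Ep where "Ep = {e \<in> II \<times> JJ. Q e < P e}"
  define Em where "Em = {e \<in> II \<times> JJ. P e < Q e}"
  have finEp: "finite Ep" unfolding Ep_def by (rule finite_subset[of _ "II \<times> JJ"]) (auto simp: finI finJ)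
  have finEm: "finite Em" unfolding Em_def by (rule finite_subset[of _ "II \<times> JJ"]) (auto simp: finI finJ)
  have "Ep \<noteq> {}"
    using one_side[OF p q a' x' ne] x' unfolding Ep_def P_def Q_def by auto
  moreover have "Em \<noteq> {}"
    using one_side[OF q p a' x'] ne x' unfolding Em_def P_def Q_def by auto
  ultimately have neEp: "Ep \<noteq> {}" and neEm: "Em \<noteq> {}" by auto
  define s1 where "s1 = Min ((\<lambda>e. P e / (P e - Q e)) ` Ep)"
  define u where "u = Min ((\<lambda>e. P e / (Q e - P e)) ` Em)"
  have "s1 \<in> (\<lambda>e. P e / (P e - Q e)) ` Ep" unfolding s1_def using finEp neEp by (intro Min_in) auto
  then obtain e1 where e1: "e1 \<in> Ep" and s1e: "s1 = P e1 / (P e1 - Q e1)" by auto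
  have "u \<in> (\<lambda>e. P e / (Q e - P e)) ` Em" unfolding u_def using finEm neEm by (intro Min_in) auto
  then obtain e2 where e2: "e2 \<in> Em" and ue: "u = P e2 / (Q e2 - P e2)" by auto
  have s1le: "\<And>e. e \<in> Ep \<Longrightarrow> s1 \<le> P e / (P e - Q e)" unfolding s1_def using finEp by auto
  have ule: "\<And>e. e \<in> Em \<Longrightarrow> u \<le> P e / (Q e - P e)" unfolding u_def using finEm by auto
  have e1d: "Q e1 < P e1" "e1 \<in> II \<times> JJ" using e1 by (auto simp: Ep_def)
  have e2d: "P e2 < Q e2" "e2 \<in> II \<times> JJ" using e2 by (auto simp: Em_def)
  have P2: "P e2 > 0" using e2d QP P0 by (metis less_eq_real_def less_irrefl)
  have s1pos: "s1 > 0" unfolding s1e using e1d Q0[of e1] by (auto intro!: divide_pos_pos)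
  have upos: "u > 0" unfolding ue using e2d P2 by (auto intro!: divide_pos_pos)
  define p1 where "p1 = mix (1 + u) p q"
  define p2 where "p2 = mix (1 - s1) p q"
  have p1v: "\<And>a x. p1 a x = P (a, x) - u * (Q (a, x) - P (a, x))"
    unfolding p1_def mix_def P_def Q_def by (simp add: algebra_simps)
  have p2v: "\<And>a x. p2 a x = P (a, x) - s1 * (P (a, x) - Q (a, x))"
    unfolding p2_def mix_def P_def Q_def by (simp add: algebra_simps)
  have st1: "st p1" unfolding p1_def
  proof (rule st_affine[OF p q])
    fix a x assume ax: "a \<in> II" "x \<in> JJ"
    have "0 \<le> P (a, x) - u * (Q (a, x) - P (a, x))"
    proof (cases "(a, x) \<in> Em")
      case True
      hence d: "Q (a, x) - P (a, x) > 0" by (simp add: Em_def)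
      have "u * (Q (a, x) - P (a, x)) \<le> P (a, x) / (Q (a, x) - P (a, x)) * (Q (a, x) - P (a, x))"
        using ule[OF True] d by (intro mult_right_mono) auto
      thus ?thesis using d by simp
    next
      case False
      hence "Q (a, x) \<le> P (a, x)" using ax by (auto simp: Em_def)
      hence "u * (Q (a, x) - P (a, x)) \<le> 0" using upos by (intro mult_nonneg_nonpos) auto
      thus ?thesis using P0[of "(a, x)"] by linarith
    qed
    thus "0 \<le> (1 + u) * p a x + (1 - (1 + u)) * q a x" using p1v[of a x] unfolding p1_def mix_def by simp
  qed
  have st2: "st p2" unfolding p2_def
  proof (rule st_affine[OF p q])
    fix a x assume ax: "a \<in> II" "x \<in> JJ"
    have "0 \<le> P (a, x) - s1 * (P (a, x) - Q (a, x))"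
    proof (cases "(a, x) \<in> Ep")
      case True
      hence d: "P (a, x) - Q (a, x) > 0" by (simp add: Ep_def)
      have "s1 * (P (a, x) - Q (a, x)) \<le> P (a, x) / (P (a, x) - Q (a, x)) * (P (a, x) - Q (a, x))"
        using s1le[OF True] d by (intro mult_right_mono) auto
      thus ?thesis using d by simp
    next
      case False
      hence "P (a, x) \<le> Q (a, x)" using ax by (auto simp: Ep_def)
      hence "s1 * (P (a, x) - Q (a, x)) \<le> 0" using s1pos by (intro mult_nonneg_nonpos) auto
      thus ?thesis using P0[of "(a, x)"] by linarith
    qed
    thus "0 \<le> (1 - s1) * p a x + (1 - (1 - s1)) * q a x" using p2v[of a x] unfolding p2_def mix_def by simp
  qed
  have sub1: "supp p1 \<subseteq> supp p"
  proof
    fix e assume "e \<in> supp p1"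
    hence e: "e \<in> II \<times> JJ" "p1 (fst e) (snd e) \<noteq> 0" by (simp_all add: supp_def)
    have v: "p1 (fst e) (snd e) = P e - u * (Q e - P e)" using p1v[of "fst e" "snd e"] by simp
    have "P e \<noteq> 0"
    proof
      assume h: "P e = 0"
      hence "Q e = 0" by (rule QP)
      hence "p1 (fst e) (snd e) = 0" using v h by simp
      thus False using e by simp
    qed
    thus "e \<in> supp p" using e by (simp add: supp_def P_def)
  qed
  have sub2: "supp p2 \<subseteq> supp p"
  proof
    fix e assume "e \<in> supp p2"
    hence e: "e \<in> II \<times> JJ" "p2 (fst e) (snd e) \<noteq> 0" by (simp_all add: supp_def)
    have v: "p2 (fst e) (snd e) = P e - s1 * (P e - Q e)" using p2v[of "fst e" "snd e"] by simp
    have "P e \<noteq> 0"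
    proof
      assume h: "P e = 0"
      hence "Q e = 0" by (rule QP)
      hence "p2 (fst e) (snd e) = 0" using v h by simp
      thus False using e by simp
    qed
    thus "e \<in> supp p" using e by (simp add: supp_def P_def)
  qed
  have "e2 \<in> supp p" using e2d P2 by (auto simp: supp_def P_def)
  moreover have "e2 \<notin> supp p1"
  proof -
    have "p1 (fst e2) (snd e2) = P e2 - u * (Q e2 - P e2)" using p1v[of "fst e2" "snd e2"] by simp
    also have "\<dots> = 0" unfolding ue using e2d by simp
    finally show ?thesis by (simp add: supp_def)
  qed
  ultimately have ps1: "supp p1 \<subset> supp p" using sub1 by blast
  have "e1 \<in> supp p" using e1d Q0[of e1] by (auto simp: supp_def P_def)
  moreover have "e1 \<notin> supp p2"
  proof -
    have "p2 (fst e1) (snd e1) = P e1 - s1 * (P e1 - Q e1)" using p2v[of "fst e1" "snd e1"] by simp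
    also have "\<dots> = 0" unfolding s1e using e1d by simp
    finally show ?thesis by (simp add: supp_def)
  qed
  ultimately have ps2: "supp p2 \<subset> supp p" using sub2 by blast
  define \<theta> where "\<theta> = s1 / (s1 + u)"
  have th0: "0 \<le> \<theta>" and th1: "\<theta> \<le> 1" using s1pos upos by (auto simp: \<theta>_def)
  have thk: "\<theta> * u = (1 - \<theta>) * s1" using s1pos upos by (simp add: \<theta>_def field_simps)
  have "p = mix \<theta> p1 p2"
  proof (intro ext)
    fix a x
    have "mix \<theta> p1 p2 a x = P (a, x) + (P (a, x) - Q (a, x)) * (\<theta> * u - (1 - \<theta>) * s1)"
      unfolding mix_def p1v p2v by (simp add: algebra_simps)
    also have "\<dots> = p a x" using thk by (simp add: P_def)
    finally show "p a x = mix \<theta> p1 p2 a x" by simp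
  qed
  thus ?thesis using st1 st2 th0 th1 ps1 ps2 by blast
qed

lemma basic_induct:
  assumes base: "\<And>p. basic p \<Longrightarrow> R p"
    and step: "\<And>p1 p2 \<theta>. st p1 \<Longrightarrow> st p2 \<Longrightarrow> 0 \<le> \<theta> \<Longrightarrow> \<theta> \<le> 1 \<Longrightarrow> R p1 \<Longrightarrow> R p2 \<Longrightarrow> R (mix \<theta> p1 p2)"
  shows "st p \<Longrightarrow> R p"
proof (induction "card (supp p)" arbitrary: p rule: less_induct)
  case less
  show ?case
  proof (cases "basic p")
    case True thus ?thesis by (rule base)
  next
    case False
    then obtain q where q: "st q" "supp q \<subseteq> supp p" "q \<noteq> p" using less.prems unfolding basic_def by blast
    obtain p1 p2 \<theta> where d: "st p1" "st p2" "0 \<le> \<theta>" "\<theta> \<le> 1" "supp p1 \<subset> supp p" "supp p2 \<subset> supp p"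
      "p = mix \<theta> p1 p2" using decomp[OF less.prems q] by blast
    have "R p1" using less.hyps[OF psubset_card_mono[OF fin_supp d(5)] d(1)] .
    moreover have "R p2" using less.hyps[OF psubset_card_mono[OF fin_supp d(6)] d(2)] .
    ultimately show ?thesis using step[OF d(1-4)] d(7) by simp
  qed
qed

lemma finite_basic: "finite {p. basic p}"
proof (rule inj_on_finite[of supp _ "Pow (II \<times> JJ)"])
  show "inj_on supp {p. basic p}" unfolding inj_on_def basic_def by auto
  show "supp ` {p. basic p} \<subseteq> Pow (II \<times> JJ)" by (auto simp: supp_def)
  show "finite (Pow (II \<times> JJ))" by (simp add: finI finJ)
qed


lemma dominate:
  assumes eff: "box_effect n A X \<mu>" and p0: "st p0" and nz: "\<mu> p0 \<noteq> 0"
  shows "\<exists>a0\<in>II. \<exists>x0\<in>JJ. \<exists>\<epsilon>>0. \<forall>p. st p \<longrightarrow> \<epsilon> * p a0 x0 \<le> \<mu> p"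
proof -
  have "\<exists>b0. basic b0 \<and> \<mu> b0 > 0"
  proof (rule ccontr)
    assume "\<not> ?thesis"
    hence z: "\<And>b. basic b \<Longrightarrow> \<mu> b = 0"
      using eff_nonneg[OF eff] unfolding basic_def by (metis less_eq_real_def)
    have "\<mu> p0 = 0"
    proof (rule basic_induct[OF _ _ p0])
      fix p assume "basic p" thus "\<mu> p = 0" by (rule z)
    next
      fix p1 p2 and \<theta> :: real assume "st p1" "st p2" "0 \<le> \<theta>" "\<theta> \<le> 1" "\<mu> p1 = 0" "\<mu> p2 = 0"
      thus "\<mu> (mix \<theta> p1 p2) = 0" using eff_mix[OF eff] by simp
    qed
    thus False using nz by simp
  qed
  then obtain b0 where b0: "basic b0" "\<mu> b0 > 0" by blast
  have sb0: "st b0" using b0 unfolding basic_def by blast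
  have "\<exists>e\<in>supp b0. \<forall>p. st p \<longrightarrow> \<mu> p = 0 \<longrightarrow> p (fst e) (snd e) = 0"
  proof (rule ccontr)
    assume "\<not> ?thesis"
    hence ex: "\<And>e. e \<in> supp b0 \<Longrightarrow> \<exists>p. st p \<and> \<mu> p = 0 \<and> p (fst e) (snd e) \<noteq> 0" by blast
    have gen: "finite S \<Longrightarrow> S \<noteq> {} \<Longrightarrow> S \<subseteq> supp b0 \<Longrightarrow> \<exists>g. st g \<and> \<mu> g = 0 \<and> (\<forall>e\<in>S. g (fst e) (snd e) > 0)" for S
    proof (induction S rule: finite_ne_induct)
      case (singleton e)
      then obtain p where "st p" "\<mu> p = 0" "p (fst e) (snd e) \<noteq> 0" using ex by blast
      thus ?case using st_nonneg[of p "fst e" "snd e"] by (auto simp: less_le)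
    next
      case (insert e S)
      then obtain g where g: "st g" "\<mu> g = 0" "\<forall>e\<in>S. g (fst e) (snd e) > 0" by blast
      obtain p where p: "st p" "\<mu> p = 0" "p (fst e) (snd e) \<noteq> 0" using ex insert.prems by blast
      have pe: "p (fst e) (snd e) > 0" using p st_nonneg[of p "fst e" "snd e"] by (auto simp: less_le)
      have "st (mix (1/2) g p)" using st_mix[OF g(1) p(1)] by simp
      moreover have "\<mu> (mix (1/2) g p) = 0" using eff_mix[OF eff g(1) p(1), of "1/2"] g p by simp
      moreover have "\<forall>e'\<in>insert e S. mix (1/2) g p (fst e') (snd e') > 0"
      proof
        fix e' assume e': "e' \<in> insert e S"
        have "0 < g (fst e') (snd e') + p (fst e') (snd e')"
        proof (cases "e' = e")
          case True thus ?thesis using pe st_nonneg[OF g(1), of "fst e'" "snd e'"] by simp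
        next
          case False
          hence "g (fst e') (snd e') > 0" using e' g(3) by blast
          thus ?thesis using st_nonneg[OF p(1), of "fst e'" "snd e'"] by simp
        qed
        thus "mix (1/2) g p (fst e') (snd e') > 0" unfolding mix_def by simp
      qed
      ultimately show ?case by blast
    qed
    obtain x where x: "x \<in> JJ" using neJ by blast
    have "(\<Sum>a\<in>II. b0 a x) = 1" by (rule st_norm[OF sb0 x])
    then obtain a where a: "a \<in> II" "b0 a x \<noteq> 0" by (metis sum.neutral zero_neq_one)
    hence ne: "supp b0 \<noteq> {}" using x by (auto simp: supp_def)
    obtain g where g: "st g" "\<mu> g = 0" "\<forall>e\<in>supp b0. g (fst e) (snd e) > 0"
      using gen[OF fin_supp ne order_refl] by blast
    define B where "B = (\<lambda>e. b0 (fst e) (snd e))"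
    define G where "G = (\<lambda>e. g (fst e) (snd e))"
    have Bpos: "\<And>e. e \<in> supp b0 \<Longrightarrow> B e > 0"
      unfolding B_def supp_def using st_nonneg[OF sb0] by (auto simp: less_le)
    define s where "s = Min ((\<lambda>e. G e / B e) ` supp b0)"
    have "s \<in> (\<lambda>e. G e / B e) ` supp b0" unfolding s_def using fin_supp ne by (intro Min_in) auto
    then obtain e0 where e0: "e0 \<in> supp b0" "s = G e0 / B e0" by auto
    have spos: "s > 0" using e0 Bpos[of e0] g(3) unfolding G_def by auto
    have sle: "\<And>e. e \<in> supp b0 \<Longrightarrow> s \<le> G e / B e" unfolding s_def using fin_supp by auto
    define q where "q = mix (1 + s) g b0"
    have q: "st q" unfolding q_def
    proof (rule st_affine[OF g(1) sb0])
      fix a x assume ax: "a \<in> II" "x \<in> JJ"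
      have G0: "0 \<le> G (a, x)" unfolding G_def using st_nonneg[OF g(1)] by simp
      have "s * B (a, x) \<le> G (a, x)"
      proof (cases "(a, x) \<in> supp b0")
        case True
        have "s * B (a, x) \<le> G (a, x) / B (a, x) * B (a, x)"
          using sle[OF True] Bpos[OF True] by (intro mult_right_mono) auto
        thus ?thesis using Bpos[OF True] by simp
      next
        case False
        hence "B (a, x) = 0" using ax by (simp add: supp_def B_def)
        thus ?thesis using G0 by simp
      qed
      moreover have "0 \<le> s * G (a, x)" using G0 spos by simp
      ultimately have "0 \<le> (1 + s) * G (a, x) - s * B (a, x)" by (simp add: algebra_simps)
      thus "0 \<le> (1 + s) * g a x + (1 - (1 + s)) * b0 a x" by (simp add: G_def B_def algebra_simps)
    qed
    have kc: "(1 + s) * (1 / (1 + s)) = 1" using spos by simp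
    have "g = mix (1 / (1 + s)) q b0"
      unfolding q_def mix_def by (intro ext) (simp only: aux2[OF kc])
    hence "\<mu> g = 1 / (1 + s) * \<mu> q + (1 - 1 / (1 + s)) * \<mu> b0"
      using eff_mix[OF eff q sb0, of "1 / (1 + s)"] spos by simp
    moreover have "0 \<le> 1 / (1 + s) * \<mu> q" using eff_nonneg[OF eff q] spos by simp
    moreover have "0 < (1 - 1 / (1 + s)) * \<mu> b0" using spos b0(2) by (simp add: field_simps)
    ultimately show False using g(2) by linarith
  qed
  then obtain e where e: "e \<in> supp b0" and van: "\<And>p. st p \<Longrightarrow> \<mu> p = 0 \<Longrightarrow> p (fst e) (snd e) = 0" by blast
  define a0 where "a0 = fst e"
  define x0 where "x0 = snd e"
  have "e \<in> II \<times> JJ" using e by (simp add: supp_def)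
  hence a0: "a0 \<in> II" and x0: "x0 \<in> JJ" unfolding a0_def x0_def mem_Times_iff by simp_all
  define Bs where "Bs = {b. basic b \<and> b a0 x0 > 0}"
  have finBs: "finite Bs" unfolding Bs_def by (rule finite_subset[OF _ finite_basic]) auto
  have b0Bs: "b0 \<in> Bs" unfolding Bs_def using b0(1) e st_nonneg[OF sb0, of a0 x0]
    by (auto simp: supp_def a0_def x0_def less_le)
  define \<epsilon> where "\<epsilon> = Min ((\<lambda>b. \<mu> b / b a0 x0) ` Bs)"
  have "\<epsilon> \<in> (\<lambda>b. \<mu> b / b a0 x0) ` Bs" unfolding \<epsilon>_def using finBs b0Bs by (intro Min_in) auto
  then obtain b1 where b1: "b1 \<in> Bs" "\<epsilon> = \<mu> b1 / b1 a0 x0" by auto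
  have sb1: "st b1" "b1 a0 x0 > 0" using b1 unfolding Bs_def basic_def by auto
  have "\<mu> b1 \<noteq> 0" using van[OF sb1(1)] sb1(2) by (auto simp: a0_def x0_def)
  hence "\<mu> b1 > 0" using eff_nonneg[OF eff sb1(1)] by simp
  hence epos: "\<epsilon> > 0" using b1(2) sb1(2) by simp
  have ele: "\<And>b. b \<in> Bs \<Longrightarrow> \<epsilon> \<le> \<mu> b / b a0 x0" unfolding \<epsilon>_def using finBs by auto
  have "\<forall>p. st p \<longrightarrow> \<epsilon> * p a0 x0 \<le> \<mu> p"
  proof (intro allI impI)
    fix p assume p: "st p"
    show "\<epsilon> * p a0 x0 \<le> \<mu> p"
    proof (rule basic_induct[OF _ _ p])
      fix b assume bb: "basic b"
      hence sb: "st b" unfolding basic_def by blast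
      show "\<epsilon> * b a0 x0 \<le> \<mu> b"
      proof (cases "b a0 x0 > 0")
        case True
        hence "b \<in> Bs" using bb by (simp add: Bs_def)
        hence "\<epsilon> * b a0 x0 \<le> \<mu> b / b a0 x0 * b a0 x0" using ele True by (intro mult_right_mono) auto
        thus ?thesis using True by simp
      next
        case False
        hence "b a0 x0 = 0" using st_nonneg[OF sb, of a0 x0] by simp
        thus ?thesis using eff_nonneg[OF eff sb] by simp
      qed
    next
      fix p1 p2 and \<theta> :: real assume h: "st p1" "st p2" "0 \<le> \<theta>" "\<theta> \<le> 1" "\<epsilon> * p1 a0 x0 \<le> \<mu> p1" "\<epsilon> * p2 a0 x0 \<le> \<mu> p2"
      have "\<epsilon> * mix \<theta> p1 p2 a0 x0 = \<theta> * (\<epsilon> * p1 a0 x0) + (1 - \<theta>) * (\<epsilon> * p2 a0 x0)"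
        unfolding mix_def by (simp add: algebra_simps)
      also have "\<dots> \<le> \<theta> * \<mu> p1 + (1 - \<theta>) * \<mu> p2"
        using h by (intro add_mono mult_left_mono) auto
      also have "\<dots> = \<mu> (mix \<theta> p1 p2)" using eff_mix[OF eff h(1,2,3,4)] by simp
      finally show "\<epsilon> * mix \<theta> p1 p2 a0 x0 \<le> \<mu> (mix \<theta> p1 p2)" .
    qed
  qed
  thus ?thesis using a0 x0 epos by blast
qed


lemma single_sum:
  fixes p R :: "(nat \<Rightarrow> 'a) \<Rightarrow> (nat \<Rightarrow> 'x) \<Rightarrow> real"
  assumes a0: "a0 \<in> II" and x0: "x0 \<in> JJ"
    and z: "\<And>a x. a \<in> II \<Longrightarrow> x \<in> JJ \<Longrightarrow> (a, x) \<noteq> (a0, x0) \<Longrightarrow> R a x = 0"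
  shows "(\<Sum>a\<in>II. \<Sum>x\<in>JJ. p a x * R a x) = p a0 x0 * R a0 x0"
proof -
  have inner: "(\<Sum>x\<in>JJ. p a x * R a x) = (if a = a0 then p a0 x0 * R a0 x0 else 0)" if a: "a \<in> II" for a
  proof -
    have "(\<Sum>x\<in>JJ. p a x * R a x) = (\<Sum>x\<in>JJ. if x = x0 then (if a = a0 then p a0 x0 * R a0 x0 else 0) else 0)"
    proof (rule sum.cong[OF refl])
      fix x assume x: "x \<in> JJ"
      show "p a x * R a x = (if x = x0 then (if a = a0 then p a0 x0 * R a0 x0 else 0) else 0)"
      proof (cases "a = a0 \<and> x = x0")
        case False thus ?thesis using z[OF a x] by auto
      qed auto
    qed
    also have "\<dots> = (if a = a0 then p a0 x0 * R a0 x0 else 0)" using x0 finJ by simp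
    finally show ?thesis .
  qed
  have "(\<Sum>a\<in>II. \<Sum>x\<in>JJ. p a x * R a x) = (\<Sum>a\<in>II. if a = a0 then p a0 x0 * R a0 x0 else 0)"
    by (rule sum.cong[OF refl]) (rule inner)
  also have "\<dots> = p a0 x0 * R a0 x0" using a0 finI by simp
  finally show ?thesis .
qed

end

theorem lemma3:
  fixes n :: nat and A :: "nat \<Rightarrow> 'a set" and X :: "nat \<Rightarrow> 'x set"
    and Out :: "'r set" and \<mu> :: "'r \<Rightarrow> ((nat \<Rightarrow> 'a) \<Rightarrow> (nat \<Rightarrow> 'x) \<Rightarrow> real) \<Rightarrow> real"
  assumes "box_system n A X"
    and "box_measurement n A X Out \<mu>"
    and "\<forall>r\<in>Out. \<exists>p. box_state n A X p \<and> \<mu> r p \<noteq> 0"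
  shows "box_max_informative n A X Out \<mu> \<longleftrightarrow>
    (\<forall>r\<in>Out. \<exists>R. box_represents n A X R (\<mu> r) \<and>
       (\<exists>!ax. ax \<in> PiE {..<n} A \<times> PiE {..<n} X \<and> R (fst ax) (snd ax) \<noteq> 0) \<and>
       (\<forall>a\<in>PiE {..<n} A. \<forall>x\<in>PiE {..<n} X. R a x \<noteq> 0 \<longrightarrow> 0 < R a x \<and> R a x \<le> 1))"
proof -
  interpret boxes n A X by unfold_locales (rule assms(1))
  have finOut: "finite Out" and effs: "\<And>r. r \<in> Out \<Longrightarrow> box_effect n A X (\<mu> r)"
    and sum1: "\<And>p. st p \<Longrightarrow> (\<Sum>r\<in>Out. \<mu> r p) = 1"
    using assms(2) unfolding box_measurement_def by blast+
  show ?thesis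
  proof
    assume mi: "box_max_informative n A X Out \<mu>"
    show "\<forall>r\<in>Out. \<exists>R. box_represents n A X R (\<mu> r) \<and>
       (\<exists>!ax. ax \<in> II \<times> JJ \<and> R (fst ax) (snd ax) \<noteq> 0) \<and>
       (\<forall>a\<in>II. \<forall>x\<in>JJ. R a x \<noteq> 0 \<longrightarrow> 0 < R a x \<and> R a x \<le> 1)"
    proof
      fix r assume r: "r \<in> Out"
      obtain p0 where p0: "st p0" "\<mu> r p0 \<noteq> 0" using assms(3) r by blast
      obtain a0 x0 \<epsilon> where a0: "a0 \<in> II" and x0: "x0 \<in> JJ" and epos: "\<epsilon> > 0"
        and dom: "\<And>p. st p \<Longrightarrow> \<epsilon> * p a0 x0 \<le> \<mu> r p"
        using dominate[OF effs[OF r] p0] by blast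
      define \<nu>1 where "\<nu>1 = (\<lambda>p::(nat \<Rightarrow> 'a) \<Rightarrow> (nat \<Rightarrow> 'x) \<Rightarrow> real. \<epsilon> * p a0 x0)"
      define \<nu>2 where "\<nu>2 = (\<lambda>p. \<mu> r p - \<nu>1 p)"
      have e1: "box_effect n A X \<nu>1" unfolding box_effect_def
      proof (intro conjI allI impI)
        fix p assume p: "st p"
        show "0 \<le> \<nu>1 p" unfolding \<nu>1_def using epos st_nonneg[OF p] by simp
        show "\<nu>1 p \<le> 1" unfolding \<nu>1_def using dom[OF p] eff_le1[OF effs[OF r] p] by linarith
      next
        fix p q and t :: real
        show "\<nu>1 (\<lambda>a x. t * p a x + (1 - t) * q a x) = t * \<nu>1 p + (1 - t) * \<nu>1 q"
          unfolding \<nu>1_def by (simp add: algebra_simps)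
      qed
      have e2: "box_effect n A X \<nu>2" unfolding box_effect_def
      proof (intro conjI allI impI)
        fix p assume p: "st p"
        show "0 \<le> \<nu>2 p" unfolding \<nu>2_def \<nu>1_def using dom[OF p] by simp
        show "\<nu>2 p \<le> 1" unfolding \<nu>2_def \<nu>1_def
          using eff_le1[OF effs[OF r] p] epos st_nonneg[OF p, of a0 x0] by (smt (verit) mult_nonneg_nonneg)
      next
        fix p q and t :: real assume p: "st p" and q: "st q" and t: "0 \<le> t" "t \<le> 1"
        have "\<mu> r (mix t p q) = t * \<mu> r p + (1 - t) * \<mu> r q" by (rule eff_mix[OF effs[OF r] p q t])
        thus "\<nu>2 (\<lambda>a x. t * p a x + (1 - t) * q a x) = t * \<nu>2 p + (1 - t) * \<nu>2 q"
          unfolding \<nu>2_def \<nu>1_def mix_def by (simp add: algebra_simps)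
      qed
      define N where "N = card Out"
      obtain h where h: "bij_betw h {0..<N} Out" using ex_bij_betw_nat_finite[OF finOut] unfolding N_def by blast
      obtain s0 where s0: "s0 < N" "h s0 = r" using h r unfolding bij_betw_def by (metis atLeastLessThan_iff imageE)
      define Out' where "Out' = {0..<Suc N}"
      define f where "f = (\<lambda>s. if s < N then h s else r)"
      define \<nu> where "\<nu> = (\<lambda>s. if s < N then (if h s = r then \<nu>1 else \<mu> (h s)) else \<nu>2)"
      have hin: "\<And>s. s < N \<Longrightarrow> h s \<in> Out" using h unfolding bij_betw_def by auto
      have hinj: "\<And>s s'. s < N \<Longrightarrow> s' < N \<Longrightarrow> h s = h s' \<Longrightarrow> s = s'"
        using h unfolding bij_betw_def inj_on_def by auto
      have ref: "box_refines_via n A X Out' \<nu> f Out \<mu>"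
        unfolding box_refines_via_def box_measurement_def
      proof (intro conjI ballI allI impI)
        show "finite Out'" by (simp add: Out'_def)
      next
        fix s assume "s \<in> Out'"
        show "box_effect n A X (\<nu> s)" unfolding \<nu>_def using e1 e2 effs hin by auto
      next
        fix s assume "s \<in> Out'" thus "f s \<in> Out" unfolding f_def using hin r by auto
      next
        fix p assume p: "st p"
        have "(\<Sum>s\<in>Out'. \<nu> s p) = (\<Sum>s\<in>{0..<N}. \<nu> s p) + \<nu>2 p"
          by (simp add: Out'_def \<nu>_def)
        also have "(\<Sum>s\<in>{0..<N}. \<nu> s p) = (\<Sum>s\<in>{0..<N}. (\<lambda>r'. if r' = r then \<nu>1 p else \<mu> r' p) (h s))"
          by (rule sum.cong[OF refl]) (auto simp: \<nu>_def)
        also have "\<dots> = (\<Sum>r'\<in>Out. if r' = r then \<nu>1 p else \<mu> r' p)" by (rule sum.reindex_bij_betw[OF h])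
        also have "\<dots> = (\<Sum>r'\<in>Out. \<mu> r' p + (if r' = r then \<nu>1 p - \<mu> r p else 0))"
          by (rule sum.cong[OF refl]) auto
        also have "\<dots> = 1 + (\<nu>1 p - \<mu> r p)" using sum1[OF p] finOut r by (simp add: sum.distrib)
        finally show "(\<Sum>s\<in>Out'. \<nu> s p) = 1" by (simp add: \<nu>2_def)
      next
        fix r' p assume r': "r' \<in> Out" and p: "st p"
        obtain s' where s': "s' < N" "h s' = r'" using h r' unfolding bij_betw_def by (metis atLeastLessThan_iff imageE)
        show "\<mu> r' p = (\<Sum>s\<in>{s \<in> Out'. f s = r'}. \<nu> s p)"
        proof (cases "r' = r")
          case False
          have "{s \<in> Out'. f s = r'} = {s'}"
            using s' hinj False by (auto simp: Out'_def f_def)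
          thus ?thesis using s' False by (simp add: \<nu>_def)
        next
          case True
          have "{s \<in> Out'. f s = r'} = {s', N}"
          proof (rule set_eqI)
            fix x show "x \<in> {s \<in> Out'. f s = r'} \<longleftrightarrow> x \<in> {s', N}"
            proof (cases "x < N")
              case True
              thus ?thesis using s' hinj[of x s'] True \<open>r' = r\<close> by (auto simp: Out'_def f_def)
            next
              case False
              thus ?thesis using s' \<open>r' = r\<close> by (auto simp: Out'_def f_def)
            qed
          qed
          thus ?thesis using s' True by (simp add: \<nu>_def \<nu>2_def)
        qed
      qed
      have "box_trivial_via n A X Out' \<nu> f \<mu>" using mi ref unfolding box_max_informative_def by blast
      moreover have "s0 \<in> Out'" using s0 by (simp add: Out'_def)
      ultimately obtain c where c: "\<And>p. st p \<Longrightarrow> \<nu> s0 p = c * \<mu> (f s0) p"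
        unfolding box_trivial_via_def by blast
      have cdef: "\<And>p. st p \<Longrightarrow> \<epsilon> * p a0 x0 = c * \<mu> r p" using c s0 by (simp add: \<nu>_def f_def \<nu>1_def)
      define d where "d = det a0"
      have sd: "st d" unfolding d_def by (rule st_det[OF a0])
      have d1: "d a0 x0 = 1" using x0 by (simp add: d_def det_def)
      define \<kappa> where "\<kappa> = \<mu> r d"
      have "\<epsilon> \<le> \<kappa>" using dom[OF sd] d1 by (simp add: \<kappa>_def)
      hence kpos: "\<kappa> > 0" using epos by simp
      have k1: "\<kappa> \<le> 1" unfolding \<kappa>_def by (rule eff_le1[OF effs[OF r] sd])
      have "\<epsilon> = c * \<kappa>" using cdef[OF sd] d1 by (simp add: \<kappa>_def)
      hence cne: "c \<noteq> 0" using epos by auto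
      have rep: "\<And>p. st p \<Longrightarrow> \<mu> r p = p a0 x0 * \<kappa>"
      proof -
        fix p assume p: "st p"
        have "c * \<mu> r p = c * (p a0 x0 * \<kappa>)" using cdef[OF p] \<open>\<epsilon> = c * \<kappa>\<close> by (simp add: algebra_simps) (metis mult.commute)
        thus "\<mu> r p = p a0 x0 * \<kappa>" using cne by simp
      qed
      define R where "R = (\<lambda>a x. if a = a0 \<and> x = x0 then \<kappa> else (0::real))"
      have "box_represents n A X R (\<mu> r)" unfolding box_represents_def
      proof (intro allI impI)
        fix p assume p: "st p"
        have "(\<Sum>a\<in>II. \<Sum>x\<in>JJ. p a x * R a x) = p a0 x0 * R a0 x0"
          by (rule single_sum[OF a0 x0]) (auto simp: R_def)
        thus "\<mu> r p = (\<Sum>a\<in>II. \<Sum>x\<in>JJ. p a x * R a x)" using rep[OF p] by (simp add: R_def)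
      qed
      note rr = this
      have uu: "\<exists>!ax. ax \<in> II \<times> JJ \<and> R (fst ax) (snd ax) \<noteq> 0"
      proof (rule ex1I[of _ "(a0, x0)"])
        show "(a0, x0) \<in> II \<times> JJ \<and> R (fst (a0, x0)) (snd (a0, x0)) \<noteq> 0" using a0 x0 kpos by (simp add: R_def)
      next
        fix ax assume "ax \<in> II \<times> JJ \<and> R (fst ax) (snd ax) \<noteq> 0"
        thus "ax = (a0, x0)" by (cases ax) (auto simp: R_def split: if_splits)
      qed
      have vv: "\<forall>a\<in>II. \<forall>x\<in>JJ. R a x \<noteq> 0 \<longrightarrow> 0 < R a x \<and> R a x \<le> 1"
        using kpos k1 by (simp add: R_def)
      show "\<exists>R. box_represents n A X R (\<mu> r) \<and>
       (\<exists>!ax. ax \<in> II \<times> JJ \<and> R (fst ax) (snd ax) \<noteq> 0) \<and>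
       (\<forall>a\<in>II. \<forall>x\<in>JJ. R a x \<noteq> 0 \<longrightarrow> 0 < R a x \<and> R a x \<le> 1)"
        by (rule exI[of _ R], intro conjI, fact rr, fact uu, fact vv)
    qed
  next
    assume H: "\<forall>r\<in>Out. \<exists>R. box_represents n A X R (\<mu> r) \<and>
       (\<exists>!ax. ax \<in> II \<times> JJ \<and> R (fst ax) (snd ax) \<noteq> 0) \<and>
       (\<forall>a\<in>II. \<forall>x\<in>JJ. R a x \<noteq> 0 \<longrightarrow> 0 < R a x \<and> R a x \<le> 1)"
    show "box_max_informative n A X Out \<mu>" unfolding box_max_informative_def
    proof (intro allI impI)
      fix Out' :: "nat set" and \<nu> f
      assume ref: "box_refines_via n A X Out' \<nu> f Out \<mu>"
      have finO': "finite Out'" and effs': "\<And>s. s \<in> Out' \<Longrightarrow> box_effect n A X (\<nu> s)"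
        and fin: "\<And>s. s \<in> Out' \<Longrightarrow> f s \<in> Out"
        and fib: "\<And>r p. r \<in> Out \<Longrightarrow> st p \<Longrightarrow> \<mu> r p = (\<Sum>s\<in>{s \<in> Out'. f s = r}. \<nu> s p)"
        using ref unfolding box_refines_via_def box_measurement_def by blast+
      show "box_trivial_via n A X Out' \<nu> f \<mu>" unfolding box_trivial_via_def
      proof
        fix s assume s: "s \<in> Out'"
        define r where "r = f s"
        have r: "r \<in> Out" unfolding r_def by (rule fin[OF s])
        obtain R where Rr: "box_represents n A X R (\<mu> r)"
          and uq: "\<exists>!ax. ax \<in> II \<times> JJ \<and> R (fst ax) (snd ax) \<noteq> 0"
          and Rv: "\<forall>a\<in>II. \<forall>x\<in>JJ. R a x \<noteq> 0 \<longrightarrow> 0 < R a x \<and> R a x \<le> 1"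
        proof -
          from bspec[OF H r] obtain R where RR: "box_represents n A X R (\<mu> r) \<and>
            (\<exists>!ax. ax \<in> II \<times> JJ \<and> R (fst ax) (snd ax) \<noteq> 0) \<and>
            (\<forall>a\<in>II. \<forall>x\<in>JJ. R a x \<noteq> 0 \<longrightarrow> 0 < R a x \<and> R a x \<le> 1)" by (rule exE)
          show ?thesis by (rule that[OF conjunct1[OF RR] conjunct1[OF conjunct2[OF RR]] conjunct2[OF conjunct2[OF RR]]])
        qed
        obtain ax where ax1: "ax \<in> II \<times> JJ \<and> R (fst ax) (snd ax) \<noteq> 0"
          and uq2: "\<forall>ay. ay \<in> II \<times> JJ \<and> R (fst ay) (snd ay) \<noteq> 0 \<longrightarrow> ay = ax"
          using uq by (rule ex1E)
        have ax: "ax \<in> II \<times> JJ" "R (fst ax) (snd ax) \<noteq> 0" using ax1 by simp_all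
        define a0 where "a0 = fst ax"
        define x0 where "x0 = snd ax"
        have a0: "a0 \<in> II" and x0: "x0 \<in> JJ" using ax(1) unfolding a0_def x0_def mem_Times_iff by simp_all
        define \<kappa> where "\<kappa> = R a0 x0"
        have kpos: "\<kappa> > 0" using Rv a0 x0 ax(2) unfolding \<kappa>_def a0_def x0_def by blast
        have zR: "\<And>a x. a \<in> II \<Longrightarrow> x \<in> JJ \<Longrightarrow> (a, x) \<noteq> (a0, x0) \<Longrightarrow> R a x = 0"
        proof (rule ccontr)
          fix a x assume h: "a \<in> II" "x \<in> JJ" "(a, x) \<noteq> (a0, x0)" "R a x \<noteq> 0"
          hence "(a, x) = ax" using uq2 by auto
          thus False using h(3) by (auto simp: a0_def x0_def)
        qed
        have rep: "\<And>p. st p \<Longrightarrow> \<mu> r p = p a0 x0 * \<kappa>"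
          using Rr single_sum[OF a0 x0 zR] unfolding box_represents_def \<kappa>_def by simp
        have van: "\<nu> s z = 0" if z: "st z" "z a0 x0 = 0" for z
        proof -
          define F where "F = {s' \<in> Out'. f s' = r}"
          have S0: "(\<Sum>s'\<in>F. \<nu> s' z) = 0" using fib[OF r z(1)] rep[OF z(1)] z(2) by (simp add: F_def)
          have finF: "finite F" using finO' by (simp add: F_def)
          have nn: "\<And>s'. s' \<in> F \<Longrightarrow> 0 \<le> \<nu> s' z" using eff_nonneg[OF effs' z(1)] by (simp add: F_def)
          have sF: "s \<in> F" using s by (simp add: r_def F_def)
          have "\<forall>x\<in>F. \<nu> x z = 0" using sum_nonneg_eq_0_iff[OF finF nn] S0 by simp
          thus ?thesis using sF by (rule bspec)
        qed
        have fac: "\<And>p. st p \<Longrightarrow> \<nu> s p = p a0 x0 * \<nu> s (det a0)"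
          using facet[OF a0 x0 effs'[OF s] van] by blast
        show "\<exists>c. \<forall>p. st p \<longrightarrow> \<nu> s p = c * \<mu> (f s) p"
        proof (intro exI allI impI)
          fix p assume p: "st p"
          show "\<nu> s p = \<nu> s (det a0) / \<kappa> * \<mu> (f s) p"
            using fac[OF p] rep[OF p] kpos by (simp add: r_def[symmetric])
        qed
      qed
    qed
  qed
qed

end
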